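(* Let $S\subset S^4$ be a round two-sphere and let $\varphi:\mathbb{Z}^2\to S$ be a discrete complex cross-ratio net. Then there exists a principal contact element net in $S^4$ congruent to $\varphi$.
   Context: $\mathbb{H}$ denotes the quaternions, $\mathbb{C}=\mathrm{span}_{\mathbb{R}}\{1,i\}\subset\mathbb{H}$; $\mathbb{H}^2$ (right $\mathbb{H}$-vector space) $\cong\mathbb{C}^4$, right multiplication by $j$ being $\mathbb{C}$-antilinear. $S^4\cong\mathbb{HP}^1=\{v\mathbb{H}\}$, $\mathbb{CP}^3=\mathbb{P}(\mathbb{C}^4)$; the twistor fibre over $v\mathbb{H}$ is the projective line through $[v],[vj]$. $Q^4=\{[\alpha]\in\mathbb{P}(\Lambda^2\mathbb{C}^4):\alpha\wedge\alpha=0\}$; $[v\wedge w]$ is identified with the line of $\mathbb{CP}^3$ through $[v],[w]$. The antilinear extension of $v\wedge w\mapsto vj\wedge wj$ gives a real structure $j$ on $Q^4$ whose fixed ("real") points are the twistor fibres, identified with points of $S^4$. A round two-sphere with a conformal structure is $\{l:Sl=l\}$ for some $S\in\mathrm{End}_{\mathbb{H}}(\mathbb{H}^2)$, $S^2=-1$; this identifies the sphere conformally with $\mathbb{CP}^1$ (its twistor lift $\mathbb{P}\{v:Sv=vi\}$). A discrete complex cross-ratio net in $S\cong\mathbb{CP}^1$ is a map $\varphi:\mathbb{Z}^2\to S$ such that for every elementary face $[\varphi(m+1,n),\varphi(m,n),\varphi(m,n+1),\varphi(m+1,n+1)]=\lambda$ for a given $\lambda\in\mathbb{C}$, where $[z_1,z_2,z_3,z_4]=\frac{(z_1-z_2)(z_3-z_4)}{(z_2-z_3)(z_4-z_1)}$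 (the cross-ratio need not be real, so faces need not be circular). A null line is a projective line contained in $Q^4$; a contact element is a null line containing a real point. A principal contact element net is a map $\Phi$ from $\mathbb{Z}^2$ to null lines of $Q^4$ such that each $\Phi(m,n)$ is a contact element, their real points are distinct, and $\Phi(m,n)\cap\Phi(m+1,n)\neq\emptyset$, $\Phi(m,n)\cap\Phi(m,n+1)\neq\emptyset$. It is congruent to $\varphi$ if the real point $\varphi(k)$ lies on $\Phi(k)$ for each $k$. *)

theory Defs
  imports "HOL-Analysis.Analysis"
begin

text \<open>The right quaternionic vector space H^2 is identified with C^4
(type complex^4) by writing a quaternion as q = a + j b with a, b complex;
the complex structure is right multiplication by i, and right multiplication
by j becomes the antilinear map (a1,b1,a2,b2) |-> (-cnj b1, cnj a1, -cnj b2, cnj a2).\<close>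

type_synonym c4 = "complex^4"
text \<open>Bivectors (elements of Lambda^2 C^4) are modelled as antisymmetric 4x4
complex matrices; v wedge w is the matrix v w^T - w v^T.\<close>
type_synonym biv = "complex^4^4"

definition vcnj :: "c4 \<Rightarrow> c4" where
  "vcnj v = (\<chi> i. cnj (v $ i))"

definition mcnj :: "complex^4^4 \<Rightarrow> complex^4^4" where
  "mcnj A = (\<chi> i k. cnj (A $ i $ k))"

definition Jmat :: "complex^4^4" where
  "Jmat = vector [vector [0, -1, 0, 0], vector [1, 0, 0, 0],
                  vector [0, 0, 0, -1], vector [0, 0, 1, 0]]"

definition Jv :: "c4 \<Rightarrow> c4" where
  "Jv v = Jmat *v vcnj v"

definition bscale :: "complex \<Rightarrow> biv \<Rightarrow> biv" where
  "bscale c A = (\<chi> i k. c * A $ i $ k)"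

definition wedge :: "c4 \<Rightarrow> c4 \<Rightarrow> biv" where
  "wedge v w = (\<chi> i k. v $ i * w $ k - w $ i * v $ k)"

definition antisym_biv :: "biv \<Rightarrow> bool" where
  "antisym_biv A \<longleftrightarrow> transpose A = - A"

text \<open>alpha wedge alpha = 0 in Lambda^4 C^4, i.e. the Pluecker relation (Pfaffian).\<close>
definition pf :: "biv \<Rightarrow> complex" where
  "pf A = A$1$2 * A$3$4 - A$1$3 * A$2$4 + A$1$4 * A$2$3"

text \<open>Points of the Klein quadric Q^4 (represented by nonzero bivectors).\<close>
definition in_Q :: "biv \<Rightarrow> bool" where
  "in_Q A \<longleftrightarrow> antisym_biv A \<and> A \<noteq> 0 \<and> pf A = 0"

text \<open>The real structure j on Lambda^2 C^4: antilinear extension of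
v wedge w |-> vj wedge wj.\<close>
definition jb :: "biv \<Rightarrow> biv" where
  "jb A = Jmat ** mcnj A ** transpose Jmat"

definition real_pt :: "biv \<Rightarrow> bool" where
  "real_pt A \<longleftrightarrow> in_Q A \<and> (\<exists>c. jb A = bscale c A)"

definition proj_eq :: "biv \<Rightarrow> biv \<Rightarrow> bool" where
  "proj_eq A B \<longleftrightarrow> (\<exists>c. B = bscale c A)"

text \<open>A projective line of P(Lambda^2 C^4) is represented by a pair of
C-linearly independent bivectors spanning it.\<close>
definition lspan :: "biv \<times> biv \<Rightarrow> biv set" where
  "lspan L = {bscale a (fst L) + bscale b (snd L) | a b. True}"

definition proj_line :: "biv \<times> biv \<Rightarrow> bool" where
  "proj_line L \<longleftrightarrow> antisym_biv (fst L) \<and> antisym_biv (snd L) \<and>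
     (\<forall>a b. bscale a (fst L) + bscale b (snd L) = 0 \<longrightarrow> a = 0 \<and> b = 0)"

definition null_line :: "biv \<times> biv \<Rightarrow> bool" where
  "null_line L \<longleftrightarrow> proj_line L \<and> (\<forall>A \<in> lspan L. pf A = 0)"

definition contact_element :: "biv \<times> biv \<Rightarrow> bool" where
  "contact_element L \<longleftrightarrow> null_line L \<and> (\<exists>A \<in> lspan L. real_pt A)"

definition lines_meet :: "biv \<times> biv \<Rightarrow> biv \<times> biv \<Rightarrow> bool" where
  "lines_meet L M \<longleftrightarrow> (\<exists>A. A \<noteq> 0 \<and> A \<in> lspan L \<and> A \<in> lspan M)"

definition distinct_real_pts :: "biv \<times> biv \<Rightarrow> biv \<times> biv \<Rightarrow> bool" where
  "distinct_real_pts L M \<longleftrightarrow>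
     (\<forall>A B. A \<in> lspan L \<longrightarrow> real_pt A \<longrightarrow> B \<in> lspan M \<longrightarrow> real_pt B \<longrightarrow> \<not> proj_eq A B)"

definition principal_contact_element_net :: "(int \<times> int \<Rightarrow> biv \<times> biv) \<Rightarrow> bool" where
  "principal_contact_element_net \<Phi> \<longleftrightarrow>
     (\<forall>k. contact_element (\<Phi> k)) \<and>
     (\<forall>m n. distinct_real_pts (\<Phi> (m, n)) (\<Phi> (m + 1, n)) \<and>
            distinct_real_pts (\<Phi> (m, n)) (\<Phi> (m, n + 1)) \<and>
            lines_meet (\<Phi> (m, n)) (\<Phi> (m + 1, n)) \<and>
            lines_meet (\<Phi> (m, n)) (\<Phi> (m, n + 1)))"

text \<open>A round two-sphere with conformal structure: S in End_H(H^2), i.e. a complex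
4x4 matrix commuting with right multiplication by j, with S^2 = -1.\<close>
definition sphere_endo :: "complex^4^4 \<Rightarrow> bool" where
  "sphere_endo S \<longleftrightarrow> (\<forall>v. S *v Jv v = Jv (S *v v)) \<and> S ** S = - mat 1"

text \<open>Twistor lift of the sphere: W = {v. S v = v i}; the sphere is identified with
P(W) = CP^1, a point [v] of P(W) corresponding to the point v H of S^4.\<close>
definition in_lift :: "complex^4^4 \<Rightarrow> c4 \<Rightarrow> bool" where
  "in_lift S v \<longleftrightarrow> v \<noteq> 0 \<and> S *v v = \<i> *s v"

text \<open>Cross-ratio on P(W): for z_a in W, the bivectors z_a wedge z_b lie in the
complex line Lambda^2 W, z_a wedge z_b = d_ab omega, and d_ab is the determinant of
(z_a,z_b) in a basis of W (up to a common factor). The condition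
[z1,z2,z3,z4] = lambda, i.e. d12 d34 / (d23 d41) = lambda with d23 d41 nonzero,
is expressed coordinate-freely via tensor products of these bivectors.\<close>
definition cross_ratio_eq :: "c4 \<Rightarrow> c4 \<Rightarrow> c4 \<Rightarrow> c4 \<Rightarrow> complex \<Rightarrow> bool" where
  "cross_ratio_eq z1 z2 z3 z4 lam \<longleftrightarrow>
     wedge z2 z3 \<noteq> 0 \<and> wedge z4 z1 \<noteq> 0 \<and>
     (\<forall>p q r s. (wedge z1 z2) $ p $ q * (wedge z3 z4) $ r $ s =
                lam * ((wedge z2 z3) $ p $ q * (wedge z4 z1) $ r $ s))"

definition cross_ratio_net :: "complex^4^4 \<Rightarrow> complex \<Rightarrow> (int \<times> int \<Rightarrow> c4) \<Rightarrow> bool" where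
  "cross_ratio_net S lam \<phi> \<longleftrightarrow>
     (\<forall>k. in_lift S (\<phi> k)) \<and>
     (\<forall>m n. cross_ratio_eq (\<phi> (m + 1, n)) (\<phi> (m, n)) (\<phi> (m, n + 1)) (\<phi> (m + 1, n + 1)) lam)"

text \<open>The real point of Q^4 corresponding to the point vH of S^4 is the twistor
fibre through [v],[vj], i.e. [v wedge vj].\<close>
definition congruent_net :: "(int \<times> int \<Rightarrow> biv \<times> biv) \<Rightarrow> (int \<times> int \<Rightarrow> c4) \<Rightarrow> bool" where
  "congruent_net \<Phi> \<phi> \<longleftrightarrow> (\<forall>k. wedge (\<phi> k) (Jv (\<phi> k)) \<in> lspan (\<Phi> k))"

end

theory Submission
  imports Defs
begin

lemma vec4_eq: "(x::'a^4) = y \<longleftrightarrow> x$1 = y$1 \<and> x$2 = y$2 \<and> x$3 = y$3 \<and> x$4 = y$4"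
  by (simp add: vec_eq_iff forall_4)

lemma Jmat_rows: "Jmat $ 1 = vector [0, -1, 0, 0]" "Jmat $ 2 = vector [1, 0, 0, 0]"
  "Jmat $ 3 = vector [0, 0, 0, -1]" "Jmat $ 4 = vector [0, 0, 1, 0]"
  unfolding Jmat_def by (simp_all add: vector_def)

lemma v4: "vector [a,b,c,d] $ (1::4) = a" "vector [a,b,c,d] $ (2::4) = b"
  "vector [a,b,c,d] $ (3::4) = c" "vector [a,b,c,d] $ (4::4) = d"
  by (simp_all add: vector_def)

lemma Jv_comp: "Jv v $ 1 = - cnj (v$2)" "Jv v $ 2 = cnj (v$1)"
   "Jv v $ 3 = - cnj (v$4)" "Jv v $ 4 = cnj (v$3)"
  by (simp_all add: Jv_def matrix_vector_mult_def sum_4 Jmat_rows v4 vcnj_def)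

lemma Jv_lin: "Jv (a *s x + b *s y) = cnj a *s Jv x + cnj b *s Jv y"
  by (simp add: vec4_eq Jv_comp algebra_simps)

lemma Jv_scale: "Jv (a *s x) = cnj a *s Jv x"
  by (simp add: vec4_eq Jv_comp algebra_simps)

lemma Jv_Jv: "Jv (Jv x) = - x"
  by (simp add: vec4_eq Jv_comp)

lemma Jv_zero: "Jv x = 0 \<longleftrightarrow> x = 0"
  by (auto simp add: vec4_eq Jv_comp)

lemma Mv_lin: "(S::complex^4^4) *v (a *s x + b *s y) = a *s (S *v x) + b *s (S *v y)"
  by (simp add: vec4_eq matrix_vector_mult_def sum_4 algebra_simps)

lemma Mv_scale: "(S::complex^4^4) *v (a *s x) = a *s (S *v x)"
  by (simp add: vec4_eq matrix_vector_mult_def sum_4 algebra_simps)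

definition pw2 :: "complex^4^4 \<Rightarrow> complex^4^4 \<Rightarrow> biv \<Rightarrow> biv" where
  "pw2 P Q X = (\<chi> i k. \<Sum>j\<in>UNIV. \<Sum>l\<in>UNIV. P$i$j * X$j$l * Q$k$l)"

lemma pw2_wedge: "pw2 P Q (wedge x y) $ i $ k = (P *v x)$i * (Q *v y)$k - (P *v y)$i * (Q *v x)$k"
  by (simp add: pw2_def wedge_def matrix_vector_mult_def sum_4 algebra_simps)

lemma pw2_zero: "pw2 P Q 0 = 0"
  by (simp add: pw2_def vec_eq_iff)

lemma wedge_comp: "wedge x y $ i $ k = x$i * y$k - y$i * x$k"
  by (simp add: wedge_def)

lemma bscale_comp: "bscale c A $ i $ k = c * A$i$k"
  by (simp add: bscale_def)

lemma biv_eq: "(A::biv) = B \<longleftrightarrow> (\<forall>i k. A$i$k = B$i$k)"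
  by (simp add: vec_eq_iff)

lemma wedge_lin2: "bscale a (wedge x y) + bscale b (wedge x z) = wedge x (a *s y + b *s z)"
  by (simp add: biv_eq bscale_comp wedge_comp algebra_simps)

lemma wedge_scale: "wedge (a *s x) (b *s y) = bscale (a*b) (wedge x y)"
  by (simp add: biv_eq bscale_comp wedge_comp algebra_simps)

lemma pf_wedge: "pf (wedge x y) = 0"
  by (simp add: pf_def wedge_comp algebra_simps)

lemma antisym_wedge: "antisym_biv (wedge x y)"
  by (simp add: antisym_biv_def biv_eq wedge_comp transpose_def)

lemma wedge_swap: "wedge y x = - wedge x y"
  by (simp add: biv_eq wedge_comp)

lemma mcnj_comp: "mcnj A $ i $ k = cnj (A $ i $ k)"
  by (simp add: mcnj_def)

lemma jb_comp: "jb A $ i $ k = (\<Sum>j\<in>UNIV. \<Sum>l\<in>UNIV. Jmat$i$j * cnj (A$j$l) * Jmat$k$l)"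
  by (simp add: jb_def matrix_matrix_mult_def transpose_def mcnj_comp sum_distrib_left sum_distrib_right mult.assoc)
    (rule sum.swap)

lemma biv_eq4: "(A::biv) = B \<longleftrightarrow> (\<forall>i k. A$i$k = B$i$k)"
  by (simp add: vec_eq_iff)

lemma jb_wedge: "jb (wedge x y) = wedge (Jv x) (Jv y)"
  unfolding biv_eq4 forall_4
  by (simp add: jb_comp sum_4 Jmat_rows v4 wedge_comp Jv_comp algebra_simps)

lemma jb_zero: "jb 0 = 0"
  by (simp add: biv_eq jb_comp)

lemma sep:
  fixes S :: "complex^4^4"
  assumes "S *v X = \<i> *s X" "S *v Y = (-\<i>) *s Y" "S *v (X+Y) = \<i> *s (X+Y)"
  shows "Y = 0"
proof -
  have "S *v (X+Y) = \<i> *s X + (-\<i>) *s Y" using assms by (simp add: matrix_vector_right_distrib)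
  with assms(3) have "\<forall>j. \<i> * X$j + \<i> * Y$j = \<i> * X$j - \<i> * Y$j"
    by (simp add: vec_eq_iff algebra_simps)
  then show ?thesis by (simp add: vec_eq_iff)
qed

lemma eig_J:
  fixes S :: "complex^4^4"
  assumes "\<forall>v. S *v Jv v = Jv (S *v v)" "S *v x = \<i> *s x"
  shows "S *v Jv x = (-\<i>) *s Jv x"
  using assms by (simp add: Jv_scale)

lemma indep:
  assumes "wedge u v \<noteq> 0" "a *s u + b *s v = 0"
  shows "a = 0 \<and> b = 0"
proof -
  from assms(2) have e: "\<And>i. a * u$i + b * v$i = 0" by (simp add: vec_eq_iff)
  from assms(1) obtain i k where nz: "u$i * v$k - v$i * u$k \<noteq> 0"
    by (auto simp add: biv_eq wedge_comp)
  have ai: "a * u$i = -(b * v$i)" "a * u$k = -(b * v$k)" using e[of i] e[of k]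
    by (simp_all add: eq_neg_iff_add_eq_0)
  have "a * (u$i * v$k - v$i * u$k) = (a * u$i) * v$k - v$i * (a * u$k)" by (simp add: algebra_simps)
  also have "\<dots> = (-(b * v$i)) * v$k - v$i * (-(b * v$k))" by (simp only: ai)
  also have "\<dots> = 0" by (simp add: algebra_simps)
  finally have "a = 0" using nz by simp
  have bi: "b * v$i = -(a * u$i)" "b * v$k = -(a * u$k)" using e[of i] e[of k]
    by (simp_all add: eq_neg_iff_add_eq_0 add.commute)
  have "b * (u$i * v$k - v$i * u$k) = u$i * (b * v$k) - (b * v$i) * u$k" by (simp add: algebra_simps)
  also have "\<dots> = u$i * (-(a * u$k)) - (-(a * u$i)) * u$k" by (simp only: bi)
  also have "\<dots> = 0" by (simp add: algebra_simps)
  finally have "b = 0" using nz by simp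
  with \<open>a = 0\<close> show ?thesis by simp
qed

lemma span2:
  fixes S :: "complex^4^4"
  assumes hS: "\<forall>v. S *v Jv v = Jv (S *v v)"
    and hu: "S *v u = \<i> *s u" and hv: "S *v v = \<i> *s v" and hw: "S *v w = \<i> *s w"
    and nz: "wedge u v \<noteq> 0"
  shows "\<exists>a b. w = a *s u + b *s v"
proof -
  define M :: "complex^4^4" where "M = (\<chi> i j. if j=1 then u$i else if j = 2 then v$i else if j=3 then Jv u $ i else Jv v $ i)"
  have Mc: "M *v c = (c$1 *s u + c$2 *s v) + (c$3 *s Jv u + c$4 *s Jv v)" for c
    by (simp add: vec_eq_iff matrix_vector_mult_def sum_4 M_def algebra_simps)
  have XW: "S *v (a *s u + b *s v) = \<i> *s (a *s u + b *s v)" for a b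
    by (simp add: Mv_lin Mv_scale matrix_vector_right_distrib hu hv vector_smult_assoc algebra_simps mult.commute)
  have YW: "S *v (a *s Jv u + b *s Jv v) = (-\<i>) *s (a *s Jv u + b *s Jv v)" for a b
    by (simp add: Mv_lin Mv_scale matrix_vector_right_distrib eig_J[OF hS hu] eig_J[OF hS hv] vector_smult_assoc algebra_simps mult.commute)
  have Yform: "a *s Jv u + b *s Jv v = Jv (cnj a *s u + cnj b *s v)" for a b
    by (simp add: Jv_lin)
  have ker: "\<forall>c. M *v c = 0 \<longrightarrow> c = 0"
  proof (intro allI impI)
    fix c assume "M *v c = 0"
    then have s0: "(c$1 *s u + c$2 *s v) + (c$3 *s Jv u + c$4 *s Jv v) = 0" by (simp add: Mc)
    have "S *v ((c$1 *s u + c$2 *s v) + (c$3 *s Jv u + c$4 *s Jv v)) = \<i> *s ((c$1 *s u + c$2 *s v) + (c$3 *s Jv u + c$4 *s Jv v))"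
      by (simp only: s0) simp
    then have Y0: "c$3 *s Jv u + c$4 *s Jv v = 0" using sep[OF XW YW] by blast
    with s0 have X0: "c$1 *s u + c$2 *s v = 0" by simp
    from Y0 have "cnj (c$3) *s u + cnj (c$4) *s v = 0" by (simp add: Yform Jv_zero)
    from indep[OF nz this] indep[OF nz X0] show "c = 0" by (simp add: vec4_eq)
  qed
  then obtain B where "B ** M = mat 1" using matrix_left_invertible_ker by blast
  then have "M ** B = mat 1" using matrix_left_right_inverse by blast
  then have "w = M *v (B *v w)" by (simp add: matrix_vector_mul_assoc)
  then have w: "w = (c$1 *s u + c$2 *s v) + (c$3 *s Jv u + c$4 *s Jv v)" if "c = B *v w" for c
    using that by (simp add: Mc)
  have "c$3 *s Jv u + c$4 *s Jv v = 0" if "c = B *v w" for c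
    using sep[OF XW YW] hw w[OF that] by metis
  with w[of "B *v w"] show ?thesis by auto
qed

lemma wedge_prop:
  fixes S :: "complex^4^4"
  assumes hS: "\<forall>v. S *v Jv v = Jv (S *v v)"
    and hx: "S *v x = \<i> *s x" and hy: "S *v y = \<i> *s y"
    and hz: "S *v z = \<i> *s z" and hw: "S *v w = \<i> *s w"
    and nz: "wedge x y \<noteq> 0"
  shows "\<exists>t. wedge z w = bscale t (wedge x y)"
proof -
  obtain a b where z: "z = a *s x + b *s y" using span2[OF hS hx hy hz nz] by blast
  obtain c d where w: "w = c *s x + d *s y" using span2[OF hS hx hy hw nz] by blast
  have "wedge z w = bscale (a*d - b*c) (wedge x y)"
    unfolding z w by (simp add: biv_eq wedge_comp bscale_comp algebra_simps)
  then show ?thesis by blast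
qed

definition Pp :: "complex^4^4 \<Rightarrow> complex^4^4" where
  "Pp S = (\<chi> i j. S$i$j + (if i = j then \<i> else 0))"
definition Qm :: "complex^4^4 \<Rightarrow> complex^4^4" where
  "Qm S = (\<chi> i j. S$i$j - (if i = j then \<i> else 0))"

lemma Pp_mv: "Pp S *v x = S *v x + \<i> *s x"
  by (simp add: vec4_eq Pp_def matrix_vector_mult_def sum_4 algebra_simps)

lemma Qm_mv: "Qm S *v x = S *v x - \<i> *s x"
  by (simp add: vec4_eq Qm_def matrix_vector_mult_def sum_4 algebra_simps)

lemma pw2_bscale: "pw2 P Q (bscale c X) = bscale c (pw2 P Q X)"
  by (simp add: biv_eq pw2_def bscale_comp sum_distrib_left algebra_simps)

lemma PQ_W:
  fixes S :: "complex^4^4"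
  assumes hS: "\<forall>v. S *v Jv v = Jv (S *v v)" and hx: "S *v x = \<i> *s x"
  shows "Pp S *v x = (2*\<i>) *s x" "Qm S *v x = 0"
    "Pp S *v Jv x = 0" "Qm S *v Jv x = (-2*\<i>) *s Jv x"
  using eig_J[OF hS hx] hx by (simp_all add: Pp_mv Qm_mv vec_eq_iff algebra_simps)

lemma realpt_form:
  fixes S :: "complex^4^4"
  assumes hS: "\<forall>v. S *v Jv v = Jv (S *v v)"
    and hx: "S *v x = \<i> *s x" and hy: "S *v y = \<i> *s y"
    and nz: "wedge x y \<noteq> 0"
    and A: "A = wedge x (a *s Jv x + b *s y)" and r: "real_pt A"
  shows "b = 0"
proof -
  define z where "z = a *s Jv x + b *s y"
  obtain c where c: "jb A = bscale c A" using r by (auto simp: real_pt_def)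
  have A0: "A \<noteq> 0" using r by (simp add: real_pt_def in_Q_def)
  have jjA: "jb (jb A) = A" unfolding A z_def[symmetric] by (simp add: jb_wedge Jv_Jv biv_eq wedge_comp)
  have "c \<noteq> 0"
  proof
    assume "c = 0"
    then have "jb A = 0" using c by (simp add: biv_eq bscale_comp)
    then have "A = 0" using jjA jb_zero by simp
    with A0 show False by simp
  qed
  have Pz: "Pp S *v z = (2*\<i>*b) *s y"
    unfolding z_def by (simp add: Mv_lin PQ_W[OF hS hx] PQ_W[OF hS hy] vector_smult_assoc mult.commute)
  have "pw2 (Pp S) (Pp S) (jb A) = pw2 (Pp S) (Pp S) (bscale c A)" using c by simp
  then have "\<forall>i k. pw2 (Pp S) (Pp S) (jb A) $i$k = pw2 (Pp S) (Pp S) (bscale c A) $i$k" by simp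
  then have e: "\<forall>i k. 0 = c * ((2*\<i>) * x$i * ((2*\<i>*b) * y$k) - (2*\<i>*b) * y$i * ((2*\<i>) * x$k))"
    unfolding pw2_bscale A z_def[symmetric] jb_wedge
    by (simp add: pw2_wedge bscale_comp PQ_W[OF hS hx] Pz)
  from nz obtain i k where nzik: "x$i * y$k - y$i * x$k \<noteq> 0"
    by (auto simp add: biv_eq wedge_comp)
  have "0 = c * ((2*\<i>) * x$i * ((2*\<i>*b) * y$k) - (2*\<i>*b) * y$i * ((2*\<i>) * x$k))" using e by blast
  also have "\<dots> = (-4) * c * b * (x$i * y$k - y$i * x$k)" by (simp add: algebra_simps)
  finally show "b = 0" using nzik \<open>c \<noteq> 0\<close> by simp
qed

lemma realpt_distinct:
  fixes S :: "complex^4^4"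
  assumes hS: "\<forall>v. S *v Jv v = Jv (S *v v)"
    and hx: "S *v x = \<i> *s x" and hy: "S *v y = \<i> *s y"
    and nz: "wedge x y \<noteq> 0"
    and e: "bscale a' (wedge y (Jv y)) = bscale c (bscale a (wedge x (Jv x)))" and a': "a' \<noteq> 0"
  shows False
proof -
  have "pw2 (Pp S) (Qm S) (bscale a' (wedge y (Jv y))) = pw2 (Pp S) (Qm S) (bscale c (bscale a (wedge x (Jv x))))"
    using e by simp
  then have "\<forall>i k. pw2 (Pp S) (Qm S) (bscale a' (wedge y (Jv y))) $i$k = pw2 (Pp S) (Qm S) (bscale c (bscale a (wedge x (Jv x)))) $i$k"
    by simp
  then have e2: "\<forall>i k. a' * ((2*\<i>) * y$i * ((-2*\<i>) * Jv y $ k)) = c * (a * ((2*\<i>) * x$i * ((-2*\<i>) * Jv x $ k)))"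
    by (simp add: pw2_bscale pw2_wedge bscale_comp PQ_W[OF hS hx] PQ_W[OF hS hy])
  have "y \<noteq> 0" using nz by (auto simp: biv_eq wedge_comp)
  then have "Jv y \<noteq> 0" by (simp add: Jv_zero)
  then obtain k0 where k0: "Jv y $ k0 \<noteq> 0" by (auto simp: vec_eq_iff)
  define K where "K = a' * Jv y $ k0"
  define L where "L = c * a * Jv x $ k0"
  have KL: "K * y$i = L * x$i" for i
  proof -
    have "4 * (K * y$i) = 4 * (L * x$i)" using e2[rule_format, of i k0]
      by (simp add: K_def L_def algebra_simps)
    then show ?thesis by simp
  qed
  have K0: "K \<noteq> 0" using a' k0 by (simp add: K_def)
  from nz obtain i k where nzik: "x$i * y$k - y$i * x$k \<noteq> 0"
    by (auto simp add: biv_eq wedge_comp)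
  have "K * (x$i * y$k - y$i * x$k) = x$i * (K * y$k) - (K * y$i) * x$k" by (simp add: algebra_simps)
  also have "\<dots> = x$i * (L * x$k) - (L * x$i) * x$k" by (simp only: KL)
  also have "\<dots> = 0" by (simp add: algebra_simps)
  finally show False using K0 nzik by simp
qed

lemma cr_nz:
  assumes "cross_ratio_eq z1 z2 z3 z4 lam" "lam \<noteq> 0"
  shows "wedge z1 z2 \<noteq> 0"
proof -
  from assms(1) have b: "wedge z2 z3 \<noteq> 0" and d: "wedge z4 z1 \<noteq> 0"
    and e: "\<forall>p q r s. (wedge z1 z2) $ p $ q * (wedge z3 z4) $ r $ s =
                lam * ((wedge z2 z3) $ p $ q * (wedge z4 z1) $ r $ s)"
    by (auto simp: cross_ratio_eq_def)
  from b obtain p q where "(wedge z2 z3)$p$q \<noteq> 0" by (auto simp: biv_eq)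
  moreover from d obtain r s where "(wedge z4 z1)$r$s \<noteq> 0" by (auto simp: biv_eq)
  ultimately have "(wedge z1 z2) $ p $ q * (wedge z3 z4) $ r $ s \<noteq> 0" using e assms(2) by simp
  then show ?thesis by auto
qed

lemma R_nz:
  fixes S :: "complex^4^4"
  assumes hS: "\<forall>v. S *v Jv v = Jv (S *v v)"
    and hx: "S *v x = \<i> *s x" and x0: "x \<noteq> 0"
  shows "wedge x (Jv x) \<noteq> 0"
proof
  assume h: "wedge x (Jv x) = 0"
  have "\<forall>i k. pw2 (Pp S) (Qm S) (wedge x (Jv x)) $i$k = 0" by (simp add: h pw2_zero)
  then have e: "\<forall>i k. (2*\<i>) * x$i * ((-2*\<i>) * Jv x $ k) = 0"
    by (simp add: pw2_wedge PQ_W[OF hS hx])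
  from x0 obtain i where "x$i \<noteq> 0" by (auto simp: vec_eq_iff)
  moreover from x0 have "Jv x \<noteq> 0" by (simp add: Jv_zero)
  then obtain k where "Jv x $ k \<noteq> 0" by (auto simp: vec_eq_iff)
  ultimately show False using e by auto
qed

lemma lspan_iff: "A \<in> lspan (wedge x u, wedge x v) \<longleftrightarrow> (\<exists>a b. A = wedge x (a *s u + b *s v))"
  by (auto simp: lspan_def wedge_lin2)

lemma contact:
  fixes S :: "complex^4^4"
  assumes hS: "\<forall>v. S *v Jv v = Jv (S *v v)"
    and hx: "S *v x = \<i> *s x" and hy: "S *v y = \<i> *s y"
    and nz: "wedge x y \<noteq> 0"
  shows "contact_element (wedge x (Jv x), wedge x y)"
proof -
  have x0: "x \<noteq> 0" using nz by (auto simp: biv_eq wedge_comp)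
  have R0: "wedge x (Jv x) \<noteq> 0" using R_nz[OF hS hx x0] .
  have pl: "proj_line (wedge x (Jv x), wedge x y)"
    unfolding proj_line_def
  proof (simp add: antisym_wedge, intro allI impI)
    fix a b assume h: "bscale a (wedge x (Jv x)) + bscale b (wedge x y) = 0"
    then have h2: "wedge x (a *s Jv x + b *s y) = 0" by (simp add: wedge_lin2)
    have Pz: "Pp S *v (a *s Jv x + b *s y) = (2*\<i>*b) *s y"
      by (simp add: Mv_lin PQ_W[OF hS hx] PQ_W[OF hS hy] vector_smult_assoc mult.commute)
    have "\<forall>i k. pw2 (Pp S) (Pp S) (wedge x (a *s Jv x + b *s y)) $i$k = 0" by (simp add: h2 pw2_zero)
    then have e: "\<forall>i k. (2*\<i>) * x$i * ((2*\<i>*b) * y$k) - (2*\<i>*b) * y$i * ((2*\<i>) * x$k) = 0"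
      by (simp add: pw2_wedge PQ_W[OF hS hx] Pz)
    from nz obtain i k where nzik: "x$i * y$k - y$i * x$k \<noteq> 0"
      by (auto simp add: biv_eq wedge_comp)
    have "0 = (2*\<i>) * x$i * ((2*\<i>*b) * y$k) - (2*\<i>*b) * y$i * ((2*\<i>) * x$k)" using e[rule_format, of i k] by simp
    also have "\<dots> = (-4) * b * (x$i * y$k - y$i * x$k)" by (simp add: algebra_simps)
    finally have b0: "b = 0" using nzik by simp
    with h have "bscale a (wedge x (Jv x)) = 0" by (simp add: biv_eq bscale_comp)
    with R0 have "a = 0" by (auto simp: biv_eq bscale_comp)
    with b0 show "a = 0 \<and> b = 0" by simp
  qed
  have nl: "null_line (wedge x (Jv x), wedge x y)"
    unfolding null_line_def using pl by (auto simp: lspan_iff pf_wedge)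
  have inl: "wedge x (Jv x) \<in> lspan (wedge x (Jv x), wedge x y)"
    unfolding lspan_iff by (rule exI[of _ 1], rule exI[of _ 0]) simp
  have rp: "real_pt (wedge x (Jv x))"
    unfolding real_pt_def in_Q_def
    using R0 by (auto simp: antisym_wedge pf_wedge jb_wedge Jv_Jv biv_eq wedge_comp bscale_comp intro!: exI[of _ 1])
  show ?thesis unfolding contact_element_def using nl inl rp by blast
qed

lemma realpts_in:
  fixes S :: "complex^4^4"
  assumes hS: "\<forall>v. S *v Jv v = Jv (S *v v)"
    and hx: "S *v x = \<i> *s x" and hy: "S *v y = \<i> *s y"
    and nz: "wedge x y \<noteq> 0"
    and A: "A \<in> lspan (wedge x (Jv x), wedge x y)" and r: "real_pt A"
  shows "\<exists>a. a \<noteq> 0 \<and> A = bscale a (wedge x (Jv x))"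
proof -
  obtain a b where Ae: "A = wedge x (a *s Jv x + b *s y)" using A by (auto simp: lspan_iff)
  have "b = 0" using realpt_form[OF hS hx hy nz Ae r] .
  then have Ae2: "A = bscale a (wedge x (Jv x))" using Ae by (simp add: biv_eq wedge_comp bscale_comp algebra_simps)
  have "A \<noteq> 0" using r by (simp add: real_pt_def in_Q_def)
  then have "a \<noteq> 0" using Ae2 by (auto simp: biv_eq bscale_comp)
  with Ae2 show ?thesis by blast
qed

lemma distinct_pts:
  fixes S :: "complex^4^4"
  assumes hS: "\<forall>v. S *v Jv v = Jv (S *v v)"
    and hx: "S *v x = \<i> *s x" and hx2: "S *v x2 = \<i> *s x2"
    and hy: "S *v y = \<i> *s y" and hy2: "S *v y2 = \<i> *s y2"
    and nzx: "wedge x x2 \<noteq> 0" and nzy: "wedge y y2 \<noteq> 0" and nz: "wedge x y \<noteq> 0"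
  shows "distinct_real_pts (wedge x (Jv x), wedge x x2) (wedge y (Jv y), wedge y y2)"
  unfolding distinct_real_pts_def
proof (intro allI impI notI)
  fix A B assume A: "A \<in> lspan (wedge x (Jv x), wedge x x2)" and rA: "real_pt A"
    and B: "B \<in> lspan (wedge y (Jv y), wedge y y2)" and rB: "real_pt B" and pe: "proj_eq A B"
  obtain a where a: "A = bscale a (wedge x (Jv x))" using realpts_in[OF hS hx hx2 nzx A rA] by blast
  obtain a' where a': "a' \<noteq> 0" "B = bscale a' (wedge y (Jv y))" using realpts_in[OF hS hy hy2 nzy B rB] by blast
  obtain c where "B = bscale c A" using pe by (auto simp: proj_eq_def)
  then have "bscale a' (wedge y (Jv y)) = bscale c (bscale a (wedge x (Jv x)))" using a a' by simp
  then show False using realpt_distinct[OF hS hx hy nz _ a'(1)] by blast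
qed

lemma mem_snd: "X = bscale t V \<Longrightarrow> X \<in> lspan (U, V)"
  unfolding lspan_def by (rule CollectI, rule exI[of _ 0], rule exI[of _ t]) (simp add: biv_eq bscale_comp)

lemma mem_fst: "U \<in> lspan (U, V)"
  unfolding lspan_def by (rule CollectI, rule exI[of _ 1], rule exI[of _ 0]) (simp add: biv_eq bscale_comp)

theorem mainTheorem3:
  fixes S :: "complex^4^4" and lam :: complex and \<phi> :: "int \<times> int \<Rightarrow> complex^4"
  assumes "sphere_endo S"
    and "lam \<noteq> 0"
    and "cross_ratio_net S lam \<phi>"
  shows "\<exists>\<Phi>. principal_contact_element_net \<Phi> \<and> congruent_net \<Phi> \<phi>"
proof -
  from assms(1) have hS: "\<forall>v. S *v Jv v = Jv (S *v v)" by (simp add: sphere_endo_def)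
  from assms(3) have W: "\<And>k. S *v \<phi> k = \<i> *s \<phi> k"
    and cr: "\<And>m n. cross_ratio_eq (\<phi> (m + 1, n)) (\<phi> (m, n)) (\<phi> (m, n + 1)) (\<phi> (m + 1, n + 1)) lam"
    by (auto simp: cross_ratio_net_def in_lift_def)
  have V: "\<And>m n. wedge (\<phi> (m,n)) (\<phi> (m,n+1)) \<noteq> 0" using cr by (simp add: cross_ratio_eq_def)
  have H: "\<And>m n. wedge (\<phi> (m,n)) (\<phi> (m+1,n)) \<noteq> 0"
  proof -
    fix m n
    have "wedge (\<phi> (m+1,n)) (\<phi> (m,n)) \<noteq> 0" using cr_nz[OF cr assms(2)] .
    then show "wedge (\<phi> (m,n)) (\<phi> (m+1,n)) \<noteq> 0" by (metis wedge_swap neg_equal_0_iff_equal)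
  qed
  define \<Phi> where "\<Phi> = (\<lambda>k. (wedge (\<phi> k) (Jv (\<phi> k)), wedge (\<phi> k) (\<phi> (fst k, snd k + 1))))"
  have \<Phi>e: "\<Phi> (m,n) = (wedge (\<phi> (m,n)) (Jv (\<phi> (m,n))), wedge (\<phi> (m,n)) (\<phi> (m, n + 1)))" for m n
    by (simp add: \<Phi>_def)
  have ce: "contact_element (\<Phi> k)" for k
  proof -
    obtain m n where k: "k = (m,n)" by (cases k)
    show ?thesis unfolding k \<Phi>e using contact[OF hS W W V] .
  qed
  have dh: "distinct_real_pts (\<Phi> (m, n)) (\<Phi> (m + 1, n))" for m n
    unfolding \<Phi>e using distinct_pts[OF hS W W W W V V H] .
  have dv: "distinct_real_pts (\<Phi> (m, n)) (\<Phi> (m, n + 1))" for m n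
    unfolding \<Phi>e using distinct_pts[OF hS W W W W V V V] .
  have mh: "lines_meet (\<Phi> (m, n)) (\<Phi> (m + 1, n))" for m n
  proof -
    obtain t where t: "wedge (\<phi> (m,n)) (\<phi> (m+1,n)) = bscale t (wedge (\<phi> (m,n)) (\<phi> (m,n+1)))"
      using wedge_prop[OF hS W W W W V] by blast
    obtain t' where t': "wedge (\<phi> (m,n)) (\<phi> (m+1,n)) = bscale t' (wedge (\<phi> (m+1,n)) (\<phi> (m+1,n+1)))"
      using wedge_prop[OF hS W W W W V] by blast
    show ?thesis unfolding lines_meet_def \<Phi>e
      using H[of m n] mem_snd[OF t] mem_snd[OF t'] by blast
  qed
  have mv: "lines_meet (\<Phi> (m, n)) (\<Phi> (m, n + 1))" for m n
  proof -
    obtain t where t: "wedge (\<phi> (m,n+1)) (\<phi> (m,n+1+1)) = bscale t (wedge (\<phi> (m,n)) (\<phi> (m,n+1)))"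
      using wedge_prop[OF hS W W W W V] by blast
    have t': "wedge (\<phi> (m,n+1)) (\<phi> (m,n+1+1)) = bscale 1 (wedge (\<phi> (m,n+1)) (\<phi> (m,n+1+1)))"
      by (simp add: biv_eq bscale_comp)
    show ?thesis unfolding lines_meet_def \<Phi>e
      using V[of m "n+1"] mem_snd[OF t] mem_snd[OF t'] by blast
  qed
  have "principal_contact_element_net \<Phi>"
    unfolding principal_contact_element_net_def using ce dh dv mh mv by blast
  moreover have "congruent_net \<Phi> \<phi>"
    unfolding congruent_net_def \<Phi>_def using mem_fst by blast
  ultimately show ?thesis by blast
qed

end
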